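(* Color each positive integer $\ell$ as follows: write $\ell=\sum_i b_i 11^i$ with digits $0\le b_i\le 10$, let $j$ be the smallest index with $b_j\neq 0$, and color $\ell$ white if $b_j\in\{1,3,4,5,9\}$ and black if $b_j\in\{2,6,7,8,10\}$. Then there is a constant $C$ such that for every $n$, the number $N$ of monochromatic $4$-APs in $[n]$ under this coloring satisfies $\left|N-\frac{1}{72}n^2\right|\le Cn$.
   Context: A $4$-AP in $[n]=\{1,\ldots,n\}$ is a sequence $a,a+d,a+2d,a+3d$ of elements of $[n]$ with integer $d\ge 1$; it is monochromatic if all four terms have the same color. *)

theory Defs
  imports Complex_Main
begin

function lowest_digit11 :: "nat \<Rightarrow> nat" where
  "lowest_digit11 l = (if l = 0 then 0
     else if l mod 11 \<noteq> 0 then l mod 11 else lowest_digit11 (l div 11))"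
  by auto
termination by (relation "measure id") auto

definition white :: "nat \<Rightarrow> bool" where
  "white l \<longleftrightarrow> lowest_digit11 l \<in> {1,3,4,5,9}"

definition mono_4AP :: "nat \<Rightarrow> (nat \<times> nat) set" where
  "mono_4AP n = {(a, d). 1 \<le> a \<and> 1 \<le> d \<and> a + 3 * d \<le> n \<and>
      white (a + d) = white a \<and> white (a + 2 * d) = white a \<and> white (a + 3 * d) = white a}"

end

theory Submission
  imports Defs
begin

lemma ld_mult: "lowest_digit11 (11*x) = lowest_digit11 x"
proof (cases "x = 0")
  case True thus ?thesis by simp
next
  case False
  have "lowest_digit11 (11*x) = lowest_digit11 (11*x div 11)"
    using False by (subst lowest_digit11.simps) simp
  thus ?thesis by simp
qed

lemma white_mult: "white (11*x) = white x"
  unfolding white_def by (simp add: ld_mult)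

lemma ld_nd: "x mod 11 \<noteq> 0 \<Longrightarrow> lowest_digit11 x = x mod 11"
  by (subst lowest_digit11.simps) auto

lemma white_mod: "x mod 11 \<noteq> 0 \<Longrightarrow> white x = (x mod 11 \<in> {1,3,4,5,9})"
  unfolding white_def by (simp add: ld_nd)

lemma notmono:
  assumes "\<not> 11 dvd (d::nat)"
  shows "\<not>(white (a+d) = white a \<and> white (a+2*d) = white a \<and> white (a+3*d) = white a)"
proof -
  define r where "r = a mod 11"
  define s where "s = d mod 11"
  have r: "r < 11" and s: "s < 11" "s \<noteq> 0" using assms by (auto simp: r_def s_def dvd_eq_mod_eq_0)
  have m: "(a + i*d) mod 11 = (r + i*s) mod 11" for i
    unfolding r_def s_def by (metis mod_add_eq mod_add_left_eq mod_mult_right_eq)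
  have w: "(r + i*s) mod 11 \<noteq> 0 \<Longrightarrow> white (a+i*d) = ((r + i*s) mod 11 \<in> {1,3,4,5,9})" for i
    using white_mod[of "a+i*d"] m[of i] by simp
  have w0: "r mod 11 \<noteq> 0 \<Longrightarrow> white a = (r mod 11 \<in> {1,3,4,5,9})" using w[of 0] by simp
  have w1: "(r + s) mod 11 \<noteq> 0 \<Longrightarrow> white (a+d) = ((r + s) mod 11 \<in> {1,3,4,5,9})" using w[of 1] by simp
  have w2: "(r + 2*s) mod 11 \<noteq> 0 \<Longrightarrow> white (a+2*d) = ((r + 2*s) mod 11 \<in> {1,3,4,5,9})" using w[of 2] by simp
  have w3: "(r + 3*s) mod 11 \<noteq> 0 \<Longrightarrow> white (a+3*d) = ((r + 3*s) mod 11 \<in> {1,3,4,5,9})" using w[of 3] by simp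
  have rr: "r = 0 \<or> r = 1 \<or> r = 2 \<or> r = 3 \<or> r = 4 \<or> r = 5 \<or> r = 6 \<or> r = 7 \<or> r = 8 \<or> r = 9 \<or> r = 10"
    using r by arith
  have ss: "s = 1 \<or> s = 2 \<or> s = 3 \<or> s = 4 \<or> s = 5 \<or> s = 6 \<or> s = 7 \<or> s = 8 \<or> s = 9 \<or> s = 10"
    using s by arith
  show ?thesis using rr ss w0 w1 w2 w3
    by (elim disjE) simp_all
qed

lemma samecol:
  assumes "11 dvd (d::nat)" "\<not> 11 dvd a"
  shows "white (a + i*d) = white a"
proof -
  have "(i*d) mod 11 = 0" using assms by simp
  hence "(a + i*d) mod 11 = a mod 11" by (metis add.right_neutral mod_add_right_eq)
  moreover have "a mod 11 \<noteq> 0" using assms by (simp add: dvd_eq_mod_eq_0)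
  ultimately show ?thesis using white_mod[of a] white_mod[of "a+i*d"] by simp
qed

definition Tset :: "nat \<Rightarrow> (nat \<times> nat) set" where
  "Tset n = {(a, d). 1 \<le> a \<and> 1 \<le> d \<and> a + 3 * d \<le> n \<and> 11 dvd d \<and> \<not> 11 dvd a}"

lemma mono_fin: "finite (mono_4AP n)"
  by (rule finite_subset[of _ "{0..n} \<times> {0..n}"]) (auto simp: mono_4AP_def)

lemma T_fin: "finite (Tset n)"
  by (rule finite_subset[of _ "{0..n} \<times> {0..n}"]) (auto simp: Tset_def)

lemma mono_split:
  "mono_4AP n = (\<lambda>(a,d). (11*a, 11*d)) ` mono_4AP (n div 11) \<union> Tset n"
proof (rule set_eqI, clarify)
  fix a d
  show "((a,d) \<in> mono_4AP n) = ((a,d) \<in> (\<lambda>(a,d). (11*a, 11*d)) ` mono_4AP (n div 11) \<union> Tset n)"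
  proof
    assume h: "(a,d) \<in> mono_4AP n"
    hence d: "11 dvd d" using notmono[of d a] by (auto simp: mono_4AP_def)
    show "(a,d) \<in> (\<lambda>(a,d). (11*a, 11*d)) ` mono_4AP (n div 11) \<union> Tset n"
    proof (cases "11 dvd a")
      case True
      then obtain a' d' where ad: "a = 11*a'" "d = 11*d'" using d by (auto simp: dvd_def)
      have c: "white (11*(a'+d')) = white (11*a')" "white (11*(a'+2*d')) = white (11*a')"
        "white (11*(a'+3*d')) = white (11*a')"
        using h ad by (auto simp: mono_4AP_def algebra_simps)
      have "11*(a'+3*d') \<le> n" using h ad by (auto simp: mono_4AP_def)
      hence "a'+3*d' \<le> n div 11" by (simp add: less_eq_div_iff_mult_less_eq mult.commute)
      moreover have "white (a'+d') = white a'" "white (a'+2*d') = white a'" "white (a'+3*d') = white a'"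
        using c by (simp_all only: white_mult)
      ultimately have "(a',d') \<in> mono_4AP (n div 11)" using h ad by (auto simp: mono_4AP_def)
      thus ?thesis using ad by force
    next
      case False thus ?thesis using h d by (auto simp: mono_4AP_def Tset_def)
    qed
  next
    assume "(a,d) \<in> (\<lambda>(a,d). (11*a, 11*d)) ` mono_4AP (n div 11) \<union> Tset n"
    thus "(a,d) \<in> mono_4AP n"
    proof
      assume "(a,d) \<in> (\<lambda>(a,d). (11*a, 11*d)) ` mono_4AP (n div 11)"
      then obtain a' d' where ad: "a = 11*a'" "d = 11*d'" and m: "(a',d') \<in> mono_4AP (n div 11)" by auto
      have "11*(a'+3*d') \<le> n" using m by (auto simp: mono_4AP_def less_eq_div_iff_mult_less_eq mult.commute)
      moreover have e: "a + d = 11*(a'+d')" "a + 2*d = 11*(a'+2*d')" "a + 3*d = 11*(a'+3*d')"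
        using ad by simp_all
      moreover have "white (a+d) = white a" "white (a+2*d) = white a"
        "white (a+3*d) = white a" using m unfolding e unfolding ad white_mult by (auto simp: mono_4AP_def)
      ultimately show ?thesis using m ad by (auto simp: mono_4AP_def)
    next
      assume t: "(a,d) \<in> Tset n"
      hence "11 dvd d" "\<not> 11 dvd a" by (auto simp: Tset_def)
      hence "white (a + 1*d) = white a" "white (a + 2*d) = white a" "white (a + 3*d) = white a"
        using samecol by blast+
      thus ?thesis using t by (auto simp: mono_4AP_def Tset_def)
    qed
  qed
qed

lemma card_rec: "card (mono_4AP n) = card (mono_4AP (n div 11)) + card (Tset n)"
proof -
  have inj: "inj_on (\<lambda>(a,d). (11*a, 11*(d::nat))) (mono_4AP (n div 11))"
    by (auto simp: inj_on_def)
  have disj: "(\<lambda>(a,d). (11*a, 11*d)) ` mono_4AP (n div 11) \<inter> Tset n = {}"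
    by (auto simp: Tset_def)
  show ?thesis
    apply (subst mono_split)
    apply (subst card_Un_disjoint)
    using disj mono_fin T_fin apply auto[3]
    using card_image[OF inj] by simp
qed

lemma cnt: "card {a\<in>{1..m}. \<not> 11 dvd (a::nat)} = m - m div 11"
proof -
  have u: "{1..m} = {a\<in>{1..m}. \<not> 11 dvd a} \<union> (\<lambda>k. 11*k) ` {1..m div 11}"
  proof (rule set_eqI)
    fix x show "x \<in> {1..m} \<longleftrightarrow> x \<in> {a\<in>{1..m}. \<not> 11 dvd a} \<union> (\<lambda>k. 11*k) ` {1..m div 11}"
    proof
      assume x: "x \<in> {1..m}"
      show "x \<in> {a\<in>{1..m}. \<not> 11 dvd a} \<union> (\<lambda>k. 11*k) ` {1..m div 11}"
      proof (cases "11 dvd x")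
        case True
        then obtain k where k: "x = 11*k" by auto
        have "k \<in> {1..m div 11}" using x k by (auto simp: less_eq_div_iff_mult_less_eq mult.commute)
        thus ?thesis using k by auto
      qed (use x in auto)
    next
      assume "x \<in> {a\<in>{1..m}. \<not> 11 dvd a} \<union> (\<lambda>k. 11*k) ` {1..m div 11}"
      thus "x \<in> {1..m}" by (auto simp: less_eq_div_iff_mult_less_eq mult.commute)
    qed
  qed
  have "card {1..m} = card {a\<in>{1..m}. \<not> 11 dvd a} + card ((\<lambda>k. 11*k) ` {1..m div 11})"
    apply (subst u) apply (rule card_Un_disjoint) by auto
  moreover have "card ((\<lambda>k. 11*k) ` {1..m div 11}) = m div 11"
    by (subst card_image) (auto simp: inj_on_def)
  ultimately show ?thesis by simp
qed

lemma T_eq: "Tset n = (\<lambda>(e,a). (a, 11*e)) ` (SIGMA e:{1..(n-1) div 33}. {a\<in>{1..n-33*e}. \<not> 11 dvd a})"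
proof (rule set_eqI, clarify)
  fix a d
  show "(a,d) \<in> Tset n \<longleftrightarrow> (a,d) \<in> (\<lambda>(e,a). (a, 11*e)) ` (SIGMA e:{1..(n-1) div 33}. {a\<in>{1..n-33*e}. \<not> 11 dvd a})"
  proof
    assume h: "(a,d) \<in> Tset n"
    then obtain e where e: "d = 11*e" by (auto simp: Tset_def)
    have "e \<in> {1..(n-1) div 33}" using h e by (auto simp: Tset_def less_eq_div_iff_mult_less_eq)
    moreover have "a \<in> {a\<in>{1..n-33*e}. \<not> 11 dvd a}" using h e by (auto simp: Tset_def)
    ultimately show "(a,d) \<in> (\<lambda>(e,a). (a, 11*e)) ` (SIGMA e:{1..(n-1) div 33}. {a\<in>{1..n-33*e}. \<not> 11 dvd a})"
      using e by force
  next
    assume "(a,d) \<in> (\<lambda>(e,a). (a, 11*e)) ` (SIGMA e:{1..(n-1) div 33}. {a\<in>{1..n-33*e}. \<not> 11 dvd a})"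
    then obtain e where e: "d = 11*e" "e \<in> {1..(n-1) div 33}" "a \<in> {1..n-33*e}" "\<not> 11 dvd a" by auto
    have "33*e \<le> n - 1" using e(2) by (auto simp: less_eq_div_iff_mult_less_eq mult.commute)
    thus "(a,d) \<in> Tset n" using e by (auto simp: Tset_def)
  qed
qed

lemma T_card: "card (Tset n) = (\<Sum>e\<in>{1..(n-1) div 33}. (n-33*e) - (n-33*e) div 11)"
proof -
  have "card (Tset n) = card (SIGMA e:{1..(n-1) div 33}. {a\<in>{1..n-33*e}. \<not> 11 dvd a})"
    unfolding T_eq by (rule card_image) (auto simp: inj_on_def)
  also have "\<dots> = (\<Sum>e\<in>{1..(n-1) div 33}. card {a\<in>{1..n-33*e}. \<not> 11 dvd a})"
    by (rule card_SigmaI) auto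
  finally show ?thesis by (simp only: cnt)
qed

lemma gsum: "(\<Sum>e\<in>{1..q}. real e) = real q * (real q + 1) / 2"
  by (induction q) (auto simp: field_simps)

lemma div11_bounds: "10/11 * real m \<le> real (m - m div 11) \<and> real (m - m div 11) \<le> 10/11 * real m + 1"
proof -
  have e: "m = 11 * (m div 11) + m mod 11" by simp
  have "m mod 11 < 11" by simp
  hence "real (m mod 11) \<le> 10" by linarith
  moreover have "m div 11 \<le> m" by simp
  moreover have "real m = 11 * real (m div 11) + real (m mod 11)"
    by (metis e of_nat_add of_nat_mult of_nat_numeral)
  moreover have "real (m - m div 11) = real m - real (m div 11)" by (simp add: of_nat_diff)
  ultimately show ?thesis by linarith
qed

lemma lin_aux:
  fixes c L q N N2 t t2 :: real
  assumes "L \<le> c" "c \<le> L + q" "L = 10/726*N2 - 15*q - 10/726*t2" "t2 \<le> 1089" "0 \<le> q"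
    "N = 33*q + t" "1 \<le> t" "0 \<le> t2"
  shows "\<bar>c - 10/726*N2\<bar> \<le> 20 * N"
  using assms unfolding abs_le_iff by linarith

lemma T_bound:
  assumes "n \<ge> 1"
  shows "\<bar>real (card (Tset n)) - 10/726 * (real n)^2\<bar> \<le> 20 * real n"
proof -
  define q where "q = (n-1) div 33"
  define t where "t = (n-1) mod 33 + 1"
  have nq: "n = 33*q + t" using assms unfolding q_def t_def by simp
  have t1: "1 \<le> real t" "real t \<le> 33" unfolding t_def by auto
  have rn: "real n = 33 * real q + real t" using nq by simp
  have rm: "e \<in> {1..q} \<Longrightarrow> real (n - 33*e) = real n - 33 * real e" for e
    using nq by (auto simp: of_nat_diff)
  define L where "L = (\<Sum>e\<in>{1..q}. 10/11 * (real n - 33 * real e))"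
  have c: "real (card (Tset n)) = (\<Sum>e\<in>{1..q}. real ((n-33*e) - (n-33*e) div 11))"
    unfolding T_card q_def by simp
  have lo: "L \<le> real (card (Tset n))"
    unfolding c L_def
  proof (rule sum_mono)
    fix e assume e: "e \<in> {1..q}"
    show "10/11 * (real n - 33 * real e) \<le> real ((n-33*e) - (n-33*e) div 11)"
      using div11_bounds[of "n-33*e", unfolded rm[OF e]] by blast
  qed
  have hi: "real (card (Tset n)) \<le> L + real q"
  proof -
    have "real (card (Tset n)) \<le> (\<Sum>e\<in>{1..q}. 10/11 * (real n - 33 * real e) + 1)"
      unfolding c
    proof (rule sum_mono)
      fix e assume e: "e \<in> {1..q}"
      show "real ((n-33*e) - (n-33*e) div 11) \<le> 10/11 * (real n - 33 * real e) + 1"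
        using div11_bounds[of "n-33*e", unfolded rm[OF e]] by blast
    qed
    also have "\<dots> = L + real q" unfolding L_def by (simp add: sum.distrib)
    finally show ?thesis .
  qed
  have Le: "L = 10/11 * (real q * real n - 33 * (real q * (real q + 1) / 2))"
  proof -
    have "L = (\<Sum>e\<in>{1..q}. 10/11 * real n) - (\<Sum>e\<in>{1..q}. 30 * real e)"
      unfolding L_def sum_subtractf[symmetric] by (rule sum.cong) auto
    also have "\<dots> = real q * (10/11 * real n) - 30 * (\<Sum>e\<in>{1..q}. real e)"
      by (simp add: sum_distrib_left)
    finally show ?thesis unfolding gsum by (simp add: field_simps)
  qed
  have key: "L - 10/726 * (real n)^2 = - 10/11 * (33 * real q / 2 + (real t)^2 / 66)"
    unfolding Le rn by (simp add: field_simps power2_eq_square)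
  have tt: "(real t)^2 \<le> 1089" using power_mono[of "real t" 33 2] t1 by simp
  have q0: "0 \<le> real q" by simp
  have k2: "L = 10/726*(real n)^2 - 15*real q - 10/726*(real t)^2" using key by (simp add: field_simps)
  show ?thesis by (rule lin_aux[OF lo hi k2 tt q0 rn t1(1) zero_le_power2])
qed

lemma lin2:
  fixes En Em M N M2 N2 T P U2 u :: real
  assumes "\<bar>T - 10/726*N2\<bar> \<le> 20*N" "\<bar>Em\<bar> \<le> 25*M" "En = Em + M2/72 + T - N2/72"
    "N2 = 121*M2 + 22*P + U2" "0 \<le> P" "P \<le> 10*M" "0 \<le> U2" "U2 \<le> 100" "11*M \<le> N" "1 \<le> N" "0 \<le> M"
  shows "\<bar>En\<bar> \<le> 25*N"
  using assms unfolding abs_le_iff by linarith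

lemma main_bound: "\<bar>real (card (mono_4AP n)) - (1/72) * (real n)^2\<bar> \<le> 25 * real n"
proof (induction n rule: less_induct)
  case (less n)
  show ?case
  proof (cases "n = 0")
    case True
    have "mono_4AP 0 = {}" by (auto simp: mono_4AP_def)
    thus ?thesis using True by simp
  next
    case False
    define m where "m = n div 11"
    define u where "u = n mod 11"
    have mn: "m < n" using False unfolding m_def by simp
    have IH: "\<bar>real (card (mono_4AP m)) - (1/72) * (real m)^2\<bar> \<le> 25 * real m" using less mn by blast
    have nu: "n = 11*m + u" unfolding m_def u_def by simp
    have ru: "real n = 11 * real m + real u" using nu by simp
    have u10: "real u \<le> 10" unfolding u_def by simp
    have sq: "(real n)^2 = 121 * (real m)^2 + 22 * (real m * real u) + (real u)^2"
      unfolding ru by (simp add: power2_eq_square algebra_simps)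
    have P: "real m * real u \<le> 10 * real m" using mult_left_mono[OF u10, of "real m"] by (simp add: mult.commute)
    have U: "(real u)^2 \<le> 100" using power_mono[of "real u" 10 2] u10 by simp
    have cr: "real (card (mono_4AP n)) = real (card (mono_4AP m)) + real (card (Tset n))"
      using card_rec[of n] unfolding m_def by simp
    show ?thesis
      apply (rule lin2[OF T_bound IH _ sq, where En = "real (card (mono_4AP n)) - (1/72) * (real n)^2"])
      using False cr P U ru by auto
  qed
qed

theorem mainTheorem6:
  shows "\<exists>C::real. \<forall>n::nat.
           \<bar>real (card (mono_4AP n)) - (1/72) * (real n)^2\<bar> \<le> C * real n"
  using main_bound by blast

end
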